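(* Let $G$ be a gap-free finite simple graph, $s\geq1$, and $e_1,\dots,e_s$ edges of $G$ (repetitions allowed). Then the graph $G'$ associated to $(I(G)^{s+1}:e_1\cdots e_s)^{\mathrm{pol}}$ is gap-free.
   Context: $S=K[x_1,\dots,x_n]$ with the $x_i$ the vertices of $G$; $I(G)=(xy: xy\text{ an edge})$; edges identified with monomials; $(J:m)=\{f: fm\in J\}$; the ideal $J=(I(G)^{s+1}:e_1\cdots e_s)$ is generated by quadratic monomials. Polarization: $J^{\mathrm{pol}}\subseteq K[x_1,\dots,x_n,x_1',\dots,x_n']$ is generated by all $x_ix_j$ ($i\ne j$) with $x_ix_j\in J$ and all $x_kx_k'$ with $x_k^2\in J$. The associated graph $G'$ has vertex set $V(G)\cup\{x_k' : x_k^2\in J\}$ and edge set $\{x_ix_j : i\neq j, x_ix_j\in J\}\cup\{x_kx_k' : x_k^2\in J\}$, so $I(G')=J^{\mathrm{pol}}$. Two vertex-disjoint edges $uv$, $xy$ form a gap in a graph if there is no edge with one endpoint in $\{u,v\}$ and the other in $\{x,y\}$; a graph is gap-free if it has no gap. *)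

theory Defs
  imports Main "HOL-Library.Multiset"
begin

definition simple_graph :: "'a set \<Rightarrow> 'a set set \<Rightarrow> bool" where
  "simple_graph V E \<longleftrightarrow> finite V \<and>
     (\<forall>e\<in>E. \<exists>u v. u \<noteq> v \<and> u \<in> V \<and> v \<in> V \<and> e = {u, v})"

text \<open>Monomials in the variables (vertices) are multisets of vertices;
  the monomial of an edge {u,v} is uv.\<close>
definition edge_mon :: "'a set \<Rightarrow> 'a multiset" where
  "edge_mon e = mset_set e"

text \<open>A monomial m lies in the monomial ideal I(G)^k iff it is divisible by
  a product of k edges (repetitions allowed).\<close>
definition in_edge_power :: "'a set set \<Rightarrow> nat \<Rightarrow> 'a multiset \<Rightarrow> bool" where
  "in_edge_power E k m \<longleftrightarrow>
     (\<exists>fs. length fs = k \<and> set fs \<subseteq> E \<and> sum_list (map edge_mon fs) \<subseteq># m)"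

text \<open>A monomial m lies in J = (I(G)^(s+1) : e_1 ... e_s), where es = [e_1,...,e_s].\<close>
definition in_colon :: "'a set set \<Rightarrow> 'a set list \<Rightarrow> 'a multiset \<Rightarrow> bool" where
  "in_colon E es m \<longleftrightarrow> in_edge_power E (length es + 1) (m + sum_list (map edge_mon es))"

text \<open>The graph G' associated to J^pol. Original vertices are Inl x, the new
  polarization vertices x' are Inr x.\<close>
definition pol_vertices :: "'a set \<Rightarrow> 'a set set \<Rightarrow> 'a set list \<Rightarrow> ('a + 'a) set" where
  "pol_vertices V E es = Inl ` V \<union> Inr ` {x \<in> V. in_colon E es {#x, x#}}"

definition pol_edges :: "'a set \<Rightarrow> 'a set set \<Rightarrow> 'a set list \<Rightarrow> ('a + 'a) set set" where
  "pol_edges V E es =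
     {{Inl x, Inl y} | x y. x \<in> V \<and> y \<in> V \<and> x \<noteq> y \<and> in_colon E es {#x, y#}}
   \<union> {{Inl x, Inr x} | x. x \<in> V \<and> in_colon E es {#x, x#}}"

definition gap_free :: "'b set set \<Rightarrow> bool" where
  "gap_free F \<longleftrightarrow>
     (\<forall>e\<in>F. \<forall>f\<in>F. e \<inter> f = {} \<longrightarrow> (\<exists>a\<in>e. \<exists>b\<in>f. {a, b} \<in> F))"

end

theory Submission
  imports Defs
begin


definition SG :: "'a set set \<Rightarrow> bool" where
  "SG E \<longleftrightarrow> (\<forall>e\<in>E. \<exists>u v. u \<noteq> v \<and> e = {u, v})"

definition sig :: "'a set multiset \<Rightarrow> 'a multiset" where
  "sig S = sum_mset (image_mset edge_mon S)"

definition Jm :: "'a set set \<Rightarrow> 'a set multiset \<Rightarrow> 'a \<Rightarrow> 'a \<Rightarrow> bool" where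
  "Jm E S p q \<longleftrightarrow> (\<exists>F. set_mset F \<subseteq> E \<and> sig F = {#p,q#} + sig S)"

lemma edge_mon2: "u \<noteq> v \<Longrightarrow> edge_mon {u,v} = {#u,v#}"
  by (simp add: edge_mon_def)

lemma sig_add[simp]: "sig (A + B) = sig A + sig B" by (simp add: sig_def)
lemma sig_single[simp]: "sig {#e#} = edge_mon e" by (simp add: sig_def)
lemma sig_empty[simp]: "sig {#} = {#}" by (simp add: sig_def)
lemma sig_add_mset[simp]: "sig (add_mset e A) = edge_mon e + sig A" by (simp add: sig_def)

lemma size_sig: "SG E \<Longrightarrow> set_mset F \<subseteq> E \<Longrightarrow> size (sig F) = 2 * size F"
proof (induction F)
  case empty then show ?case by simp
next
  case (add x F)
  then obtain u v where "u \<noteq> v" "x = {u,v}" unfolding SG_def by auto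
  with add show ?case by (simp add: edge_mon2)
qed

lemma Jm_sym: "Jm E S p q = Jm E S q p"
  unfolding Jm_def by (simp add: add_mset_commute)

lemma Jm_edge: "{p,q} \<in> E \<Longrightarrow> p \<noteq> q \<Longrightarrow> Jm E {#} p q"
  unfolding Jm_def by (rule exI[of _ "{#{p,q}#}"]) (simp add: edge_mon2)

lemma Jm_mono: assumes "Jm E R p q" "R \<subseteq># S" "set_mset S \<subseteq> E" shows "Jm E S p q"
proof -
  obtain F where F: "set_mset F \<subseteq> E" "sig F = {#p,q#} + sig R" using assms(1) unfolding Jm_def by blast
  have "S = R + (S - R)" using assms(2) by simp
  then have "sig S = sig R + sig (S - R)" by (metis sig_add)
  moreover have "set_mset (S - R) \<subseteq> E" using assms(3) by (meson in_diffD subset_iff)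
  ultimately show ?thesis unfolding Jm_def using F
    by (intro exI[of _ "F + (S - R)"]) (auto simp: add.assoc)
qed

lemma Jm_concat: assumes "Jm E R1 p u" "Jm E R2 v q" "{u,v} \<in> E" "u \<noteq> v"
  shows "Jm E (R1 + R2 + {#{u,v}#}) p q"
proof -
  obtain F1 where F1: "set_mset F1 \<subseteq> E" "sig F1 = {#p,u#} + sig R1" using assms(1) unfolding Jm_def by blast
  obtain F2 where F2: "set_mset F2 \<subseteq> E" "sig F2 = {#v,q#} + sig R2" using assms(2) unfolding Jm_def by blast
  show ?thesis unfolding Jm_def using F1 F2 assms(4)
    by (intro exI[of _ "F1 + F2"]) (auto simp: edge_mon2 add_mset_commute)
qed

lemma mem_sig: "x \<in># sig S \<Longrightarrow> \<exists>g. g \<in># S \<and> x \<in># edge_mon g"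
  unfolding sig_def by (induction S) auto

lemma SG_edge: "SG E \<Longrightarrow> g \<in> E \<Longrightarrow> x \<in># edge_mon g \<Longrightarrow> \<exists>y. x \<noteq> y \<and> g = {x,y}"
proof -
  assume a: "SG E" "g \<in> E" "x \<in># edge_mon g"
  then obtain u v where uv: "u \<noteq> v" "g = {u,v}" unfolding SG_def by blast
  then have "x = u \<or> x = v" using a(3) by (simp add: edge_mon2)
  then show ?thesis using uv by (metis insert_commute)
qed

lemma sig_remove: "g \<in># S \<Longrightarrow> sig S = edge_mon g + sig (S - {#g#})"
  by (metis insert_DiffM sig_add_mset)

lemma Jm_D: assumes "SG E" "Jm E S p q" "set_mset S \<subseteq> E"
  shows "{p,q} \<in> E \<or> (\<exists>u v. {p,u} \<in> E \<and> p \<noteq> u \<and> u \<noteq> v \<and> {u,v} \<in># S \<and> Jm E (S - {#{u,v}#}) v q)"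
proof -
  obtain F where F: "set_mset F \<subseteq> E" "sig F = {#p,q#} + sig S" using assms(2) unfolding Jm_def by blast
  have pF: "p \<in># sig F" using F(2) by simp
  obtain f where f: "f \<in># F" "p \<in># edge_mon f" using mem_sig[OF pF] by blast
  have fE0: "f \<in> E" using f F(1) by auto
  obtain p1 where p1: "p \<noteq> p1" "f = {p,p1}" using SG_edge[OF assms(1) fE0 f(2)] by blast
  have fE: "{p,p1} \<in> E" using f F(1) p1 by auto
  have "sig F = {#p,p1#} + sig (F - {#f#})" using sig_remove[OF f(1)] p1 by (simp add: edge_mon2)
  with F(2) have eq: "add_mset q (sig S) = add_mset p1 (sig (F - {#f#}))" by simp
  show ?thesis
  proof (cases "p1 = q")
    case True then show ?thesis using fE by simp
  next
    case False
    then have pS: "p1 \<in># sig S" using eq by (metis insert_noteq_member)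
    obtain g where g: "g \<in># S" "p1 \<in># edge_mon g" using mem_sig[OF pS] by blast
    have gE0: "g \<in> E" using g assms(3) by auto
    obtain v where v: "p1 \<noteq> v" "g = {p1,v}" using SG_edge[OF assms(1) gE0 g(2)] by blast
    have "sig S = {#p1,v#} + sig (S - {#g#})" using sig_remove[OF g(1)] v by (simp add: edge_mon2)
    with eq have "sig (F - {#f#}) = {#v,q#} + sig (S - {#g#})" by (simp add: add_mset_commute)
    moreover have "set_mset (F - {#f#}) \<subseteq> E" using F(1) by (meson in_diffD subset_iff)
    ultimately have "Jm E (S - {#g#}) v q" unfolding Jm_def by blast
    then have "Jm E (S - {#{p1,v}#}) v q" using v by simp
    moreover have "{p1,v} \<in># S" using g v by simp
    ultimately show ?thesis using fE p1(1) v(1) by blast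
  qed
qed



lemma Jm_T: assumes "SG E" "set_mset S \<subseteq> E" "Jm E S c d" "{u,v} \<in># S" "u \<noteq> v"
   "\<not> Jm E (S - {#{u,v}#}) c d"
shows "\<exists>R1 R2. R1 + R2 \<subseteq># S - {#{u,v}#} \<and>
   ((Jm E R1 c u \<and> Jm E R2 v d) \<or> (Jm E R1 c v \<and> Jm E R2 u d))"
  using assms(2-6)
proof (induction "size S" arbitrary: S c rule: less_induct)
  case less
  let ?e = "{u,v}"
  have SeE: "set_mset (S - {#?e#}) \<subseteq> E" using less.prems(1) by (meson in_diffD subset_iff)
  from Jm_D[OF assms(1) less.prems(2,1)] show ?case
  proof
    assume "{c,d} \<in> E"
    moreover have "c \<noteq> d" using \<open>{c,d} \<in> E\<close> assms(1) unfolding SG_def by (metis doubleton_eq_iff)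
    ultimately have "Jm E {#} c d" by (rule Jm_edge)
    then have "Jm E (S - {#?e#}) c d" using Jm_mono[OF _ _ SeE] by simp
    with less.prems(5) show ?case by blast
  next
    assume "\<exists>w z. {c,w} \<in> E \<and> c \<noteq> w \<and> w \<noteq> z \<and> {w,z} \<in># S \<and> Jm E (S - {#{w,z}#}) z d"
    then obtain w z where wz: "{c,w} \<in> E" "c \<noteq> w" "w \<noteq> z" "{w,z} \<in># S" "Jm E (S - {#{w,z}#}) z d"
      by blast
    let ?g = "{w,z}"
    have cw: "Jm E {#} c w" by (rule Jm_edge[OF wz(1,2)])
    have gE: "?g \<in> E" using wz(4) less.prems(1) by auto
    show ?case
    proof (cases "?g = ?e")
      case True
      then have "(w = u \<and> z = v) \<or> (w = v \<and> z = u)" by (metis doubleton_eq_iff)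
      then show ?thesis
      proof
        assume "w = u \<and> z = v"
        then show ?thesis using cw wz(5) True by (intro exI[of _ "{#}"] exI[of _ "S - {#?e#}"]) auto
      next
        assume "w = v \<and> z = u"
        then show ?thesis using cw wz(5) True by (intro exI[of _ "{#}"] exI[of _ "S - {#?e#}"]) auto
      qed
    next
      case False
      have eS': "?e \<in># S - {#?g#}" using False less.prems(3) by (simp add: in_diff_count)
      have S'E: "set_mset (S - {#?g#}) \<subseteq> E" using less.prems(1) by (meson in_diffD subset_iff)
      have reassoc: "{#} + (S - {#?g#} - {#?e#}) + {#?g#} = S - {#?e#}"
        using False less.prems(3) wz(4) eS'
        by (metis add_mset_add_single add_mset_diff_bothsides add.left_neutral diff_union_swap insert_DiffM)
      have notJ: "\<not> Jm E (S - {#?g#} - {#?e#}) z d"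
      proof
        assume "Jm E (S - {#?g#} - {#?e#}) z d"
        from Jm_concat[OF cw this gE wz(3)] reassoc have "Jm E (S - {#?e#}) c d" by simp
        with less.prems(5) show False by blast
      qed
      have sz: "size (S - {#?g#}) < size S" using wz(4) by (rule size_Diff1_less)
      obtain R1 R2 where R: "R1 + R2 \<subseteq># S - {#?g#} - {#?e#}"
        "(Jm E R1 z u \<and> Jm E R2 v d) \<or> (Jm E R1 z v \<and> Jm E R2 u d)"
        using less.hyps[OF sz S'E wz(5) eS' less.prems(4) notJ] by blast
      have sub: "(R1 + {#?g#}) + R2 \<subseteq># S - {#?e#}"
      proof -
        have h0: "R1 + R2 + {#?g#} \<subseteq># S - {#?g#} - {#?e#} + {#?g#}" by (rule subset_mset.add_right_mono[OF R(1)])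
        have s1: "S - {#?g#} - {#?e#} + {#?g#} = S - {#?e#}" using reassoc by simp
        have s2: "(R1 + {#?g#}) + R2 = R1 + R2 + {#?g#}" by (simp add: add_ac)
        show ?thesis using h0 unfolding s1 s2 .
      qed
      from R(2) show ?thesis
      proof
        assume h: "Jm E R1 z u \<and> Jm E R2 v d"
        have "Jm E ({#} + R1 + {#?g#}) c u" using Jm_concat[OF cw _ gE wz(3)] h by blast
        then show ?thesis using h sub by (intro exI[of _ "R1 + {#?g#}"] exI[of _ R2]) simp
      next
        assume h: "Jm E R1 z v \<and> Jm E R2 u d"
        have "Jm E ({#} + R1 + {#?g#}) c v" using Jm_concat[OF cw _ gE wz(3)] h by blast
        then show ?thesis using h sub by (intro exI[of _ "R1 + {#?g#}"] exI[of _ R2]) simp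
      qed
    qed
  qed
qed


lemma Jm_main: assumes "SG E" "gap_free E"
  shows "set_mset S \<subseteq> E \<Longrightarrow> Jm E S a b \<Longrightarrow> Jm E S c d \<Longrightarrow> a \<notin> {c,d} \<Longrightarrow> b \<notin> {c,d} \<Longrightarrow>
    \<exists>x\<in>{a,b}. \<exists>y\<in>{c,d}. Jm E S x y"
proof (induction "size S" arbitrary: S a b c d rule: less_induct)
  case less
  have step: "\<exists>x\<in>{a,b}. \<exists>y\<in>{c,d}. Jm E S x y"
    if ab: "Jm E S a b" and cd: "Jm E S c d" and dis: "a \<notin> {c,d}" "b \<notin> {c,d}"
      and au: "{a,u} \<in> E" "a \<noteq> u" "u \<noteq> v" and eS: "{u,v} \<in># S"
      and vb: "Jm E (S - {#{u,v}#}) v b"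
    for a b c d u v
  proof -
    let ?e = "{u,v}"
    have SE: "set_mset S \<subseteq> E" by (rule less.prems(1))
    have eE: "?e \<in> E" using eS SE by auto
    have S'E: "set_mset (S - {#?e#}) \<subseteq> E" using SE by (meson in_diffD subset_iff)
    have aU: "Jm E {#} a u" by (rule Jm_edge[OF au(1,2)])
    have re: "{#} + (S - {#?e#}) + {#?e#} = S" using eS by simp
    have conc: "Jm E S a q" if "Jm E (S - {#?e#}) v q" for q
      using Jm_concat[OF aU that eE au(3)] re by simp
    show ?thesis
    proof (cases "Jm E (S - {#?e#}) c d")
      case True
      show ?thesis
      proof (cases "v = c")
        case True
        then have "Jm E S a d" using conc \<open>Jm E (S - {#?e#}) c d\<close> by simp
        then show ?thesis by blast
      next
        case vc: False
        show ?thesis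
        proof (cases "v = d")
          case True
          then have "Jm E (S - {#?e#}) v c" using \<open>Jm E (S - {#?e#}) c d\<close> Jm_sym[of E "S - {#?e#}" c d] by simp
          then have "Jm E S a c" by (rule conc)
          then show ?thesis by blast
        next
          case False
          have sz: "size (S - {#?e#}) < size S" using eS by (rule size_Diff1_less)
          obtain x y where xy: "x \<in> {v,b}" "y \<in> {c,d}" "Jm E (S - {#?e#}) x y"
            using less.hyps[OF sz S'E vb \<open>Jm E (S - {#?e#}) c d\<close>] vc False dis by auto
          show ?thesis
          proof (cases "x = b")
            case True
            then have "Jm E S b y" using Jm_mono[OF xy(3) _ SE] by simp
            then show ?thesis using xy(2) by blast
          next
            case False
            then have "x = v" using xy(1) by auto
            then show ?thesis using conc xy by blast
          qed
        qed
      qed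
    next
      case False
      obtain R1 R2 where R: "R1 + R2 \<subseteq># S - {#?e#}"
        "(Jm E R1 c u \<and> Jm E R2 v d) \<or> (Jm E R1 c v \<and> Jm E R2 u d)"
        using Jm_T[OF assms(1) SE cd eS au(3) False] by blast
      have sub1: "R2 + {#?e#} \<subseteq># S"
      proof -
        have "R2 \<subseteq># S - {#?e#}" using R(1) by (meson mset_subset_eq_add_right subset_mset.order_trans)
        then have "R2 + {#?e#} \<subseteq># S - {#?e#} + {#?e#}" by simp
        then show ?thesis using eS by simp
      qed
      have sub2: "R1 + {#?e#} \<subseteq># S"
      proof -
        have "R1 \<subseteq># S - {#?e#}" using R(1) by (meson mset_subset_eq_add_left subset_mset.order_trans)
        then have "R1 + {#?e#} \<subseteq># S - {#?e#} + {#?e#}" by simp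
        then show ?thesis using eS by simp
      qed
      from R(2) show ?thesis
      proof
        assume h: "Jm E R1 c u \<and> Jm E R2 v d"
        have "Jm E ({#} + R2 + {#?e#}) a d" using Jm_concat[OF aU conjunct2[OF h] eE au(3)] .
        then have "Jm E S a d" using Jm_mono[OF _ sub1 SE] by simp
        then show ?thesis by blast
      next
        assume h: "Jm E R1 c v \<and> Jm E R2 u d"
        have ua: "Jm E {#} u a" using aU Jm_sym[of E "{#}" u a] by simp
        have ve: "{v,u} \<in> E" using eE by (simp add: insert_commute)
        have "Jm E (R1 + {#} + {#{v,u}#}) c a" using Jm_concat[OF conjunct1[OF h] ua ve not_sym[OF au(3)]] .
        then have "Jm E (R1 + {#?e#}) c a" by (simp add: insert_commute)
        then have "Jm E (R1 + {#?e#}) a c" using Jm_sym[of E "R1 + {#?e#}" c a] by simp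
        then have "Jm E S a c" using Jm_mono[OF _ sub2 SE] by simp
        then show ?thesis by blast
      qed
    qed
  qed
  from Jm_D[OF assms(1) less.prems(2,1)] show ?case
  proof
    assume abE: "{a,b} \<in> E"
    from Jm_D[OF assms(1) less.prems(3,1)] show ?case
    proof
      assume cdE: "{c,d} \<in> E"
      have dj: "{a,b} \<inter> {c,d} = {}" using less.prems(4,5) by auto
      have gf: "\<forall>e\<in>E. \<forall>f\<in>E. e \<inter> f = {} \<longrightarrow> (\<exists>a\<in>e. \<exists>b\<in>f. {a, b} \<in> E)"
        using assms(2) unfolding gap_free_def .
      obtain x y where xy: "x \<in> {a,b}" "y \<in> {c,d}" "{x,y} \<in> E"
        using gf[rule_format, OF abE cdE dj] by blast
      have "x \<noteq> y" using xy less.prems(4,5) by auto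
      then have "Jm E S x y" using Jm_edge[OF xy(3)] Jm_mono[OF _ _ less.prems(1)] by simp
      then show ?case using xy by blast
    next
      assume "\<exists>u v. {c,u} \<in> E \<and> c \<noteq> u \<and> u \<noteq> v \<and> {u,v} \<in># S \<and> Jm E (S - {#{u,v}#}) v d"
      then obtain u v where uv: "{c,u} \<in> E" "c \<noteq> u" "u \<noteq> v" "{u,v} \<in># S" "Jm E (S - {#{u,v}#}) v d"
        by blast
      have "c \<notin> {a,b}" "d \<notin> {a,b}" using less.prems(4,5) by auto
      from step[OF less.prems(3,2) this uv] obtain x y where xy: "x \<in> {c,d}" "y \<in> {a,b}" "Jm E S x y"
        by blast
      have "Jm E S y x" using xy(3) Jm_sym[of E S x y] by simp
      then show ?case using xy(1,2) by blast
    qed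
  next
    assume "\<exists>u v. {a,u} \<in> E \<and> a \<noteq> u \<and> u \<noteq> v \<and> {u,v} \<in># S \<and> Jm E (S - {#{u,v}#}) v b"
    then obtain u v where uv: "{a,u} \<in> E" "a \<noteq> u" "u \<noteq> v" "{u,v} \<in># S" "Jm E (S - {#{u,v}#}) v b"
      by blast
    from step[OF less.prems(2,3,4,5) uv] show ?case .
  qed
qed


lemma sig_mset: "sig (mset es) = sum_list (map edge_mon es)"
  by (induction es) auto

lemma eq_of_sub_size: "(A::'a multiset) \<subseteq># B \<Longrightarrow> size A = size B \<Longrightarrow> A = B"
  by (metis subset_mset.add_diff_inverse add_cancel_right_right size_eq_0_iff_empty size_union)

lemma colon_Jm: assumes "SG E" "set es \<subseteq> E"
  shows "in_colon E es {#p,q#} \<longleftrightarrow> Jm E (mset es) p q"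
proof
  assume "in_colon E es {#p,q#}"
  then obtain fs where fs: "length fs = length es + 1" "set fs \<subseteq> E"
    "sum_list (map edge_mon fs) \<subseteq># {#p,q#} + sum_list (map edge_mon es)"
    unfolding in_colon_def in_edge_power_def by blast
  have s1: "size (sig (mset fs)) = 2 * length fs" using size_sig[OF assms(1), of "mset fs"] fs(2) by simp
  have s2: "size (sig (mset es)) = 2 * length es" using size_sig[OF assms(1), of "mset es"] assms(2) by simp
  have "sig (mset fs) = {#p,q#} + sig (mset es)"
    using fs(3) s1 s2 fs(1) unfolding sig_mset[symmetric] by (intro eq_of_sub_size) auto
  then show "Jm E (mset es) p q" unfolding Jm_def using fs(2) by (intro exI[of _ "mset fs"]) auto
next
  assume "Jm E (mset es) p q"
  then obtain F where F: "set_mset F \<subseteq> E" "sig F = {#p,q#} + sig (mset es)" unfolding Jm_def by blast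
  obtain fs where mfs: "mset fs = F" using ex_mset by blast
  have s1: "size (sig F) = 2 * size F" using size_sig[OF assms(1) F(1)] .
  have s2: "size (sig (mset es)) = 2 * length es" using size_sig[OF assms(1), of "mset es"] assms(2) by simp
  have "length fs = length es + 1" using s1 s2 F(2) mfs by auto
  moreover have "set fs \<subseteq> E" using F(1) mfs by auto
  moreover have "sum_list (map edge_mon fs) = {#p,q#} + sum_list (map edge_mon es)"
    using F(2) mfs sig_mset by metis
  ultimately show "in_colon E es {#p,q#}" unfolding in_colon_def in_edge_power_def
    by (intro exI[of _ fs]) auto
qed

lemma pol_base: assumes "SG E" "set es \<subseteq> E" "P \<in> pol_edges V E es"
  shows "\<exists>a b. a \<in> V \<and> b \<in> V \<and> Inl a \<in> P \<and> Inl b \<in> P \<and> Jm E (mset es) a b \<and>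
     (\<forall>x. Inl x \<in> P \<longrightarrow> x = a \<or> x = b)"
  using assms(3) unfolding pol_edges_def colon_Jm[OF assms(1,2)] by auto

theorem lemma6p14:
  fixes V :: "'a set" and E :: "'a set set" and es :: "'a set list"
  assumes "simple_graph V E"
    and "gap_free E"
    and "length es \<ge> 1"
    and "set es \<subseteq> E"
  shows "gap_free (pol_edges V E es)"
proof -
  have SG: "SG E" using assms(1) unfolding simple_graph_def SG_def by blast
  have esE: "set_mset (mset es) \<subseteq> E" using assms(4) by simp
  show ?thesis unfolding gap_free_def
  proof (intro ballI impI)
    fix P Q assume P: "P \<in> pol_edges V E es" and Q: "Q \<in> pol_edges V E es" and dj: "P \<inter> Q = {}"
    obtain a b where ab: "a \<in> V" "b \<in> V" "Inl a \<in> P" "Inl b \<in> P" "Jm E (mset es) a b"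
      using pol_base[OF SG assms(4) P] by blast
    obtain c d where cd: "c \<in> V" "d \<in> V" "Inl c \<in> Q" "Inl d \<in> Q" "Jm E (mset es) c d"
      "\<forall>x. Inl x \<in> Q \<longrightarrow> x = c \<or> x = d"
      using pol_base[OF SG assms(4) Q] by blast
    have "a \<notin> {c,d}" "b \<notin> {c,d}" using ab cd dj by auto
    then obtain x y where xy: "x \<in> {a,b}" "y \<in> {c,d}" "Jm E (mset es) x y"
      using Jm_main[OF SG assms(2) esE ab(5) cd(5)] by blast
    have "x \<noteq> y" using xy \<open>a \<notin> {c,d}\<close> \<open>b \<notin> {c,d}\<close> by auto
    moreover have "x \<in> V" "y \<in> V" using xy ab cd by auto
    moreover have "in_colon E es {#x,y#}" using xy(3) colon_Jm[OF SG assms(4)] by simp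
    ultimately have "{Inl x, Inl y} \<in> pol_edges V E es" unfolding pol_edges_def by blast
    moreover have "Inl x \<in> P" "Inl y \<in> Q" using xy ab cd by auto
    ultimately show "\<exists>a\<in>P. \<exists>b\<in>Q. {a, b} \<in> pol_edges V E es" by blast
  qed
qed
end
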